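(* Let $(I,=_I,\neq_I;K)$ be a completely separated set and $\boldsymbol S^*=(\lambda_0,\lambda_1^*;\phi_0,\phi_1^* )$ a global family of completely separated sets over it, with $\phi_0(i)=F_i$. Equip $\Sigma:=\sum_{i\in I}\lambda_0(i)$ with the equality and inequality of global Sigma-sets below, and let $\widehat K:=\{\widehat k\mid k\in K\}$ with $\widehat k(i,x):=k(i)$, and $\widehat H:=\{\widehat\Phi\mid\Phi\in\prod_{i\in I}F_i\}$ with $\widehat\Phi(i,x):=\Phi_i(x)$. Then for all $(i,x),(j,y)\in\Sigma$, $$(i,x)\neq_{(\Sigma,\widehat K\cup\widehat H)}(j,y)\iff(i,x)\neq_\Sigma(j,y),$$ and $(\Sigma,=_\Sigma,\neq_\Sigma;\widehat K\cup\widehat H)$ is a completely separated set.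
   Context: Setting: constructive (Bishop-style) mathematics with intuitionistic logic. Sets carry an equality; functions respect equalities; $\mathbb F(X)$ = functions $X\to\mathbb R$ with pointwise equality; an extensional subset of $\mathbb F(X)$ is $\{f\mid P(f)\}$ with $P$ respecting $=_{\mathbb F(X)}$. $a\neq_{\mathbb R}b:\Leftrightarrow|a-b|>0$. An inequality satisfies $x=y\ \&\ x\neq y\Rightarrow\bot$. Strongly extensional: $f(x)\neq f(y)\Rightarrow x\neq y$. Induced relations for $F\subseteq\mathbb F(X)$: $x=_{(X,F)}x':\Leftrightarrow\forall_{f\in F}f(x)=f(x')$, $x\neq_{(X,F)}x':\Leftrightarrow\exists_{f\in F}f(x)\neq_{\mathbb R}f(x')$. A completely separated set $(X,=_X,\neq_X;F)$: $F$ extensional, $\neq_X\Leftrightarrow\neq_{(X,F)}$, $x=_{(X,F)}x'\Rightarrow x=_Xx'$. Global family of sets with an inequality over $(I,=_I,\neq_I)$: an assignment $i\mapsto(\lambda_0(i),=_{\lambda_0(i)},\neq_{\lambda_0(i)})$ and, for every pair $(i,j)\in I\times I$ (not only $i=_Ij$), a strongly extensional function $\lambda^*_{ij}:\lambda_0(i)\to\lambda_0(j)$, such that $\lambda^*_{ii}=\mathrm{id}$ and $\lambda^*_{jk}\circ\lambda^*_{ij}=\lambda^*_{ik}$ for all $i,j,k$ with $i=_Ij$. A global family of completely separated sets over $(I,=_I,\neq_I;K)$ additionally has extensional subsets $F_i\subseteq\mathbb F(\lambda_0(i))$ and functions $\phi^*_{ij}:F_i\to F_j$ for all $i,j\in I$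 such that (a) $x\neq_{\lambda_0(i)}x'\Leftrightarrow x\neq_{(\lambda_0(i),F_i)}x'$, (b) $x=_{(\lambda_0(i),F_i)}x'\Rightarrow x=_{\lambda_0(i)}x'$, (c) $\phi^*_{ij}(f)=f\circ\lambda^*_{ji}$ for all $f\in F_i$ and all $i,j\in I$. $\prod_{i\in I}F_i$: dependent assignments $\Phi$ with $\Phi_i\in F_i$ for all $i$ and $\Phi_j=\phi^*_{ij}(\Phi_i)$ whenever $i=_Ij$. Global Sigma-set $\Sigma$: pairs $(i,x)$, $x\in\lambda_0(i)$, with $(i,x)=_\Sigma(j,y):\Leftrightarrow i=_Ij\ \&\ \lambda^*_{ij}(x)=_{\lambda_0(j)}y$ and $(i,x)\neq_\Sigma(j,y):\Leftrightarrow i\neq_{(I,K)}j\ \vee\ \lambda^*_{ij}(x)\neq_{\lambda_0(j)}y$. *)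

theory Defs
  imports Main "HOL.Real"
begin

text \<open>Classical rendering of Bishop-style sets: a set is a carrier A together with
an equality relation eq and an inequality relation neq on A.\<close>

definition real_neq :: "real \<Rightarrow> real \<Rightarrow> bool" where
  "real_neq a b \<longleftrightarrow> \<bar>a - b\<bar> > 0"

definition set_with_ineq :: "'a set \<Rightarrow> ('a \<Rightarrow> 'a \<Rightarrow> bool) \<Rightarrow> ('a \<Rightarrow> 'a \<Rightarrow> bool) \<Rightarrow> bool" where
  "set_with_ineq A eq neq \<longleftrightarrow>
     (\<forall>x\<in>A. eq x x) \<and>
     (\<forall>x\<in>A. \<forall>y\<in>A. eq x y \<longrightarrow> eq y x) \<and>
     (\<forall>x\<in>A. \<forall>y\<in>A. \<forall>z\<in>A. eq x y \<and> eq y z \<longrightarrow> eq x z) \<and>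
     (\<forall>x\<in>A. \<forall>y\<in>A. eq x y \<and> neq x y \<longrightarrow> False)"

definition fun_space :: "'a set \<Rightarrow> ('a \<Rightarrow> 'a \<Rightarrow> bool) \<Rightarrow> ('a \<Rightarrow> real) set" where
  "fun_space A eq = {f. \<forall>x\<in>A. \<forall>y\<in>A. eq x y \<longrightarrow> f x = f y}"

definition feq :: "'a set \<Rightarrow> ('a \<Rightarrow> real) \<Rightarrow> ('a \<Rightarrow> real) \<Rightarrow> bool" where
  "feq A f g \<longleftrightarrow> (\<forall>x\<in>A. f x = g x)"

definition extensional_subset :: "'a set \<Rightarrow> ('a \<Rightarrow> 'a \<Rightarrow> bool) \<Rightarrow> ('a \<Rightarrow> real) set \<Rightarrow> bool" where
  "extensional_subset A eq F \<longleftrightarrow> F \<subseteq> fun_space A eq \<and>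
     (\<forall>f\<in>F. \<forall>g\<in>fun_space A eq. feq A f g \<longrightarrow> g \<in> F)"

definition ind_eq :: "('a \<Rightarrow> real) set \<Rightarrow> 'a \<Rightarrow> 'a \<Rightarrow> bool" where
  "ind_eq F x y \<longleftrightarrow> (\<forall>f\<in>F. f x = f y)"

definition ind_neq :: "('a \<Rightarrow> real) set \<Rightarrow> 'a \<Rightarrow> 'a \<Rightarrow> bool" where
  "ind_neq F x y \<longleftrightarrow> (\<exists>f\<in>F. real_neq (f x) (f y))"

definition completely_separated ::
  "'a set \<Rightarrow> ('a \<Rightarrow> 'a \<Rightarrow> bool) \<Rightarrow> ('a \<Rightarrow> 'a \<Rightarrow> bool) \<Rightarrow> ('a \<Rightarrow> real) set \<Rightarrow> bool" where
  "completely_separated A eq neq F \<longleftrightarrow>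
     set_with_ineq A eq neq \<and> extensional_subset A eq F \<and>
     (\<forall>x\<in>A. \<forall>y\<in>A. neq x y \<longleftrightarrow> ind_neq F x y) \<and>
     (\<forall>x\<in>A. \<forall>y\<in>A. ind_eq F x y \<longrightarrow> eq x y)"

definition is_fun :: "'a set \<Rightarrow> ('a \<Rightarrow> 'a \<Rightarrow> bool) \<Rightarrow> 'b set \<Rightarrow> ('b \<Rightarrow> 'b \<Rightarrow> bool) \<Rightarrow> ('a \<Rightarrow> 'b) \<Rightarrow> bool" where
  "is_fun A eqA B eqB f \<longleftrightarrow> (\<forall>x\<in>A. f x \<in> B) \<and> (\<forall>x\<in>A. \<forall>y\<in>A. eqA x y \<longrightarrow> eqB (f x) (f y))"

definition strongly_ext :: "'a set \<Rightarrow> ('a \<Rightarrow> 'a \<Rightarrow> bool) \<Rightarrow> ('b \<Rightarrow> 'b \<Rightarrow> bool) \<Rightarrow> ('a \<Rightarrow> 'b) \<Rightarrow> bool" where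
  "strongly_ext A neqA neqB f \<longleftrightarrow> (\<forall>x\<in>A. \<forall>y\<in>A. neqB (f x) (f y) \<longrightarrow> neqA x y)"

text \<open>Global family of sets with an inequality over I: lam0 i with eq i, neq i; lam i j = lambda*_ij.\<close>
definition global_family ::
  "'i set \<Rightarrow> ('i \<Rightarrow> 'i \<Rightarrow> bool) \<Rightarrow> ('i \<Rightarrow> 'x set) \<Rightarrow> ('i \<Rightarrow> 'x \<Rightarrow> 'x \<Rightarrow> bool) \<Rightarrow>
   ('i \<Rightarrow> 'x \<Rightarrow> 'x \<Rightarrow> bool) \<Rightarrow> ('i \<Rightarrow> 'i \<Rightarrow> 'x \<Rightarrow> 'x) \<Rightarrow> bool" where
  "global_family I eqI lam0 eq neq lam \<longleftrightarrow>
     (\<forall>i\<in>I. set_with_ineq (lam0 i) (eq i) (neq i)) \<and>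
     (\<forall>i\<in>I. \<forall>j\<in>I. is_fun (lam0 i) (eq i) (lam0 j) (eq j) (lam i j) \<and>
                    strongly_ext (lam0 i) (neq i) (neq j) (lam i j)) \<and>
     (\<forall>i\<in>I. \<forall>x\<in>lam0 i. eq i (lam i i x) x) \<and>
     (\<forall>i\<in>I. \<forall>j\<in>I. \<forall>k\<in>I. eqI i j \<longrightarrow>
        (\<forall>x\<in>lam0 i. eq k (lam j k (lam i j x)) (lam i k x)))"

definition global_family_cs ::
  "'i set \<Rightarrow> ('i \<Rightarrow> 'i \<Rightarrow> bool) \<Rightarrow> ('i \<Rightarrow> 'x set) \<Rightarrow> ('i \<Rightarrow> 'x \<Rightarrow> 'x \<Rightarrow> bool) \<Rightarrow>
   ('i \<Rightarrow> 'x \<Rightarrow> 'x \<Rightarrow> bool) \<Rightarrow> ('i \<Rightarrow> 'i \<Rightarrow> 'x \<Rightarrow> 'x) \<Rightarrow>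
   ('i \<Rightarrow> ('x \<Rightarrow> real) set) \<Rightarrow> ('i \<Rightarrow> 'i \<Rightarrow> ('x \<Rightarrow> real) \<Rightarrow> ('x \<Rightarrow> real)) \<Rightarrow> bool" where
  "global_family_cs I eqI lam0 eq neq lam F phi \<longleftrightarrow>
     global_family I eqI lam0 eq neq lam \<and>
     (\<forall>i\<in>I. extensional_subset (lam0 i) (eq i) (F i)) \<and>
     (\<forall>i\<in>I. \<forall>j\<in>I. \<forall>f\<in>F i. phi i j f \<in> F j) \<and>
     (\<forall>i\<in>I. \<forall>x\<in>lam0 i. \<forall>x'\<in>lam0 i. neq i x x' \<longleftrightarrow> ind_neq (F i) x x') \<and>
     (\<forall>i\<in>I. \<forall>x\<in>lam0 i. \<forall>x'\<in>lam0 i. ind_eq (F i) x x' \<longrightarrow> eq i x x') \<and>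
     (\<forall>i\<in>I. \<forall>j\<in>I. \<forall>f\<in>F i. feq (lam0 j) (phi i j f) (f \<circ> lam j i))"

definition prod_F ::
  "'i set \<Rightarrow> ('i \<Rightarrow> 'i \<Rightarrow> bool) \<Rightarrow> ('i \<Rightarrow> 'x set) \<Rightarrow> ('i \<Rightarrow> ('x \<Rightarrow> real) set) \<Rightarrow>
   ('i \<Rightarrow> 'i \<Rightarrow> ('x \<Rightarrow> real) \<Rightarrow> ('x \<Rightarrow> real)) \<Rightarrow> ('i \<Rightarrow> 'x \<Rightarrow> real) set" where
  "prod_F I eqI lam0 F phi = {\<Phi>. (\<forall>i\<in>I. \<Phi> i \<in> F i) \<and>
      (\<forall>i\<in>I. \<forall>j\<in>I. eqI i j \<longrightarrow> feq (lam0 j) (\<Phi> j) (phi i j (\<Phi> i)))}"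

text \<open>Global Sigma-set: carrier is HOL's Sigma I lam0.\<close>
definition sig_eq :: "('i \<Rightarrow> 'i \<Rightarrow> bool) \<Rightarrow> ('i \<Rightarrow> 'x \<Rightarrow> 'x \<Rightarrow> bool) \<Rightarrow> ('i \<Rightarrow> 'i \<Rightarrow> 'x \<Rightarrow> 'x) \<Rightarrow>
   'i \<times> 'x \<Rightarrow> 'i \<times> 'x \<Rightarrow> bool" where
  "sig_eq eqI eq lam p q \<longleftrightarrow> eqI (fst p) (fst q) \<and> eq (fst q) (lam (fst p) (fst q) (snd p)) (snd q)"

definition sig_neq :: "('i \<Rightarrow> real) set \<Rightarrow> ('i \<Rightarrow> 'x \<Rightarrow> 'x \<Rightarrow> bool) \<Rightarrow> ('i \<Rightarrow> 'i \<Rightarrow> 'x \<Rightarrow> 'x) \<Rightarrow>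
   'i \<times> 'x \<Rightarrow> 'i \<times> 'x \<Rightarrow> bool" where
  "sig_neq K neq lam p q \<longleftrightarrow> ind_neq K (fst p) (fst q) \<or> neq (fst q) (lam (fst p) (fst q) (snd p)) (snd q)"

definition hatK :: "('i \<Rightarrow> real) \<Rightarrow> 'i \<times> 'x \<Rightarrow> real" where
  "hatK k = (\<lambda>(i, x). k i)"

definition hatH :: "('i \<Rightarrow> 'x \<Rightarrow> real) \<Rightarrow> 'i \<times> 'x \<Rightarrow> real" where
  "hatH \<Phi> = (\<lambda>(i, x). \<Phi> i x)"

definition KH_set ::
  "'i set \<Rightarrow> ('i \<Rightarrow> 'i \<Rightarrow> bool) \<Rightarrow> ('i \<Rightarrow> real) set \<Rightarrow> ('i \<Rightarrow> 'x set) \<Rightarrow> ('i \<Rightarrow> 'x \<Rightarrow> 'x \<Rightarrow> bool) \<Rightarrow>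
   ('i \<Rightarrow> 'i \<Rightarrow> 'x \<Rightarrow> 'x) \<Rightarrow> ('i \<Rightarrow> ('x \<Rightarrow> real) set) \<Rightarrow>
   ('i \<Rightarrow> 'i \<Rightarrow> ('x \<Rightarrow> real) \<Rightarrow> ('x \<Rightarrow> real)) \<Rightarrow> ('i \<times> 'x \<Rightarrow> real) set" where
  "KH_set I eqI K lam0 eq lam F phi =
     {f \<in> fun_space (Sigma I lam0) (sig_eq eqI eq lam).
        (\<exists>k\<in>K. feq (Sigma I lam0) f (hatK k)) \<or>
        (\<exists>\<Phi>\<in>prod_F I eqI lam0 F phi. feq (Sigma I lam0) f (hatH \<Phi>))}"

end

theory Submission
  imports Defs
begin

lemma real_neq_iff: "real_neq a b \<longleftrightarrow> a \<noteq> b"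
  by (auto simp: real_neq_def)

locale thm48 =
  fixes I :: "'i set" and eqI neqI :: "'i \<Rightarrow> 'i \<Rightarrow> bool" and K :: "('i \<Rightarrow> real) set"
    and lam0 :: "'i \<Rightarrow> 'x set" and eq neq :: "'i \<Rightarrow> 'x \<Rightarrow> 'x \<Rightarrow> bool"
    and lam :: "'i \<Rightarrow> 'i \<Rightarrow> 'x \<Rightarrow> 'x"
    and F :: "'i \<Rightarrow> ('x \<Rightarrow> real) set" and phi :: "'i \<Rightarrow> 'i \<Rightarrow> ('x \<Rightarrow> real) \<Rightarrow> ('x \<Rightarrow> real)"
  assumes CI: "completely_separated I eqI neqI K"
    and GF: "global_family_cs I eqI lam0 eq neq lam F phi"
begin

lemma CIs: "set_with_ineq I eqI neqI" "extensional_subset I eqI K"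
  "\<forall>x\<in>I. \<forall>y\<in>I. neqI x y \<longleftrightarrow> ind_neq K x y"
  "\<forall>x\<in>I. \<forall>y\<in>I. ind_eq K x y \<longrightarrow> eqI x y"
  using CI unfolding completely_separated_def by blast+
lemma CIw: "\<forall>x\<in>I. eqI x x" "\<forall>x\<in>I. \<forall>y\<in>I. eqI x y \<longrightarrow> eqI y x"
  "\<forall>x\<in>I. \<forall>y\<in>I. \<forall>z\<in>I. eqI x y \<and> eqI y z \<longrightarrow> eqI x z"
  "\<forall>x\<in>I. \<forall>y\<in>I. eqI x y \<and> neqI x y \<longrightarrow> False"
  using CIs(1) unfolding set_with_ineq_def by blast+

lemma eqI_refl: "i \<in> I \<Longrightarrow> eqI i i"
  using CIw(1) by blast
lemma eqI_sym: "i \<in> I \<Longrightarrow> j \<in> I \<Longrightarrow> eqI i j \<Longrightarrow> eqI j i"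
  using CIw(2) by blast
lemma eqI_trans: "i \<in> I \<Longrightarrow> j \<in> I \<Longrightarrow> k \<in> I \<Longrightarrow> eqI i j \<Longrightarrow> eqI j k \<Longrightarrow> eqI i k"
  using CIw(3) by blast
lemma eqI_neqI: "i \<in> I \<Longrightarrow> j \<in> I \<Longrightarrow> eqI i j \<Longrightarrow> neqI i j \<Longrightarrow> False"
  using CIw(4) by blast
lemma neqI_iff: "i \<in> I \<Longrightarrow> j \<in> I \<Longrightarrow> neqI i j \<longleftrightarrow> ind_neq K i j"
  using CIs(3) by blast
lemma K_sep: "i \<in> I \<Longrightarrow> j \<in> I \<Longrightarrow> ind_eq K i j \<Longrightarrow> eqI i j"
  using CIs(4) by blast
lemma K_resp: "k \<in> K \<Longrightarrow> i \<in> I \<Longrightarrow> j \<in> I \<Longrightarrow> eqI i j \<Longrightarrow> k i = k j"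
  using CIs(2) unfolding extensional_subset_def fun_space_def by auto

lemma GFs: "global_family I eqI lam0 eq neq lam"
  "\<forall>i\<in>I. extensional_subset (lam0 i) (eq i) (F i)"
  "\<forall>i\<in>I. \<forall>j\<in>I. \<forall>f\<in>F i. phi i j f \<in> F j"
  "\<forall>i\<in>I. \<forall>x\<in>lam0 i. \<forall>x'\<in>lam0 i. neq i x x' \<longleftrightarrow> ind_neq (F i) x x'"
  "\<forall>i\<in>I. \<forall>x\<in>lam0 i. \<forall>x'\<in>lam0 i. ind_eq (F i) x x' \<longrightarrow> eq i x x'"
  "\<forall>i\<in>I. \<forall>j\<in>I. \<forall>f\<in>F i. feq (lam0 j) (phi i j f) (f \<circ> lam j i)"
  using GF unfolding global_family_cs_def by blast+

lemma GFw: "\<forall>i\<in>I. set_with_ineq (lam0 i) (eq i) (neq i)"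
     "\<forall>i\<in>I. \<forall>j\<in>I. is_fun (lam0 i) (eq i) (lam0 j) (eq j) (lam i j) \<and>
                    strongly_ext (lam0 i) (neq i) (neq j) (lam i j)"
     "\<forall>i\<in>I. \<forall>x\<in>lam0 i. eq i (lam i i x) x"
     "\<forall>i\<in>I. \<forall>j\<in>I. \<forall>k\<in>I. eqI i j \<longrightarrow>
        (\<forall>x\<in>lam0 i. eq k (lam j k (lam i j x)) (lam i k x))"
  using GFs(1) unfolding global_family_def by blast+

lemma swi: "i \<in> I \<Longrightarrow> (\<forall>x\<in>lam0 i. eq i x x) \<and>
     (\<forall>x\<in>lam0 i. \<forall>y\<in>lam0 i. eq i x y \<longrightarrow> eq i y x) \<and>
     (\<forall>x\<in>lam0 i. \<forall>y\<in>lam0 i. \<forall>z\<in>lam0 i. eq i x y \<and> eq i y z \<longrightarrow> eq i x z) \<and>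
     (\<forall>x\<in>lam0 i. \<forall>y\<in>lam0 i. eq i x y \<and> neq i x y \<longrightarrow> False)"
  using GFw(1) unfolding set_with_ineq_def by blast

lemma eq_refl: "i \<in> I \<Longrightarrow> x \<in> lam0 i \<Longrightarrow> eq i x x"
  using swi by blast
lemma eq_sym: "i \<in> I \<Longrightarrow> x \<in> lam0 i \<Longrightarrow> y \<in> lam0 i \<Longrightarrow> eq i x y \<Longrightarrow> eq i y x"
  using swi by blast
lemma eq_trans: "i \<in> I \<Longrightarrow> x \<in> lam0 i \<Longrightarrow> y \<in> lam0 i \<Longrightarrow> z \<in> lam0 i \<Longrightarrow> eq i x y \<Longrightarrow> eq i y z \<Longrightarrow> eq i x z"
proof -
  assume a: "i \<in> I" "x \<in> lam0 i" "y \<in> lam0 i" "z \<in> lam0 i" "eq i x y" "eq i y z"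
  have "\<forall>x\<in>lam0 i. \<forall>y\<in>lam0 i. \<forall>z\<in>lam0 i. eq i x y \<and> eq i y z \<longrightarrow> eq i x z" using swi[OF a(1)] by blast
  thus ?thesis using a by blast
qed
lemma eq_neq: "i \<in> I \<Longrightarrow> x \<in> lam0 i \<Longrightarrow> y \<in> lam0 i \<Longrightarrow> eq i x y \<Longrightarrow> neq i x y \<Longrightarrow> False"
  using swi by blast
lemma lam_in: "i \<in> I \<Longrightarrow> j \<in> I \<Longrightarrow> x \<in> lam0 i \<Longrightarrow> lam i j x \<in> lam0 j"
  using GFw(2) unfolding is_fun_def by blast
lemma lam_resp: "i \<in> I \<Longrightarrow> j \<in> I \<Longrightarrow> x \<in> lam0 i \<Longrightarrow> y \<in> lam0 i \<Longrightarrow> eq i x y \<Longrightarrow> eq j (lam i j x) (lam i j y)"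
  using GFw(2) unfolding is_fun_def by blast
lemma lam_id: "i \<in> I \<Longrightarrow> x \<in> lam0 i \<Longrightarrow> eq i (lam i i x) x"
  using GFw(3) by blast
lemma lam_comp: "i \<in> I \<Longrightarrow> j \<in> I \<Longrightarrow> k \<in> I \<Longrightarrow> eqI i j \<Longrightarrow> x \<in> lam0 i \<Longrightarrow>
    eq k (lam j k (lam i j x)) (lam i k x)"
  using GFw(4) by blast

lemma F_resp: "i \<in> I \<Longrightarrow> f \<in> F i \<Longrightarrow> x \<in> lam0 i \<Longrightarrow> y \<in> lam0 i \<Longrightarrow> eq i x y \<Longrightarrow> f x = f y"
  using GFs(2) unfolding extensional_subset_def fun_space_def by auto
lemma phi_in: "i \<in> I \<Longrightarrow> j \<in> I \<Longrightarrow> f \<in> F i \<Longrightarrow> phi i j f \<in> F j"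
  using GFs(3) by blast
lemma phi_eq: "i \<in> I \<Longrightarrow> j \<in> I \<Longrightarrow> f \<in> F i \<Longrightarrow> z \<in> lam0 j \<Longrightarrow> phi i j f z = f (lam j i z)"
  using GFs(6) unfolding feq_def comp_def by blast
lemma neq_iff: "i \<in> I \<Longrightarrow> x \<in> lam0 i \<Longrightarrow> y \<in> lam0 i \<Longrightarrow> neq i x y \<longleftrightarrow> ind_neq (F i) x y"
  using GFs(4) by blast
lemma F_sep: "i \<in> I \<Longrightarrow> x \<in> lam0 i \<Longrightarrow> y \<in> lam0 i \<Longrightarrow> ind_eq (F i) x y \<Longrightarrow> eq i x y"
  using GFs(5) by blast

lemma prod_F_D1: "\<Phi> \<in> prod_F I eqI lam0 F phi \<Longrightarrow> i \<in> I \<Longrightarrow> \<Phi> i \<in> F i"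
  by (simp add: prod_F_def)
lemma prod_F_D2: "\<Phi> \<in> prod_F I eqI lam0 F phi \<Longrightarrow> i \<in> I \<Longrightarrow> j \<in> I \<Longrightarrow> eqI i j \<Longrightarrow>
   z \<in> lam0 j \<Longrightarrow> \<Phi> j z = phi i j (\<Phi> i) z"
  by (simp add: prod_F_def feq_def)

lemma Phi_construct:
  assumes j: "j \<in> I" and g: "g \<in> F j"
  shows "(\<lambda>k. phi j k g) \<in> prod_F I eqI lam0 F phi"
  unfolding prod_F_def
proof (intro CollectI conjI ballI impI)
  fix k assume "k \<in> I" thus "phi j k g \<in> F k" using phi_in j g by blast
next
  fix a b assume a: "a \<in> I" and b: "b \<in> I" and ab: "eqI a b"
  show "feq (lam0 b) (phi j b g) (phi a b (phi j a g))"
    unfolding feq_def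
  proof
    fix z assume z: "z \<in> lam0 b"
    have "phi a b (phi j a g) z = phi j a g (lam b a z)"
      using phi_eq[OF a b phi_in[OF j a g] z] .
    also have "\<dots> = g (lam a j (lam b a z))"
      using phi_eq[OF j a g lam_in[OF b a z]] .
    also have "\<dots> = g (lam b j z)"
      using F_resp[OF j g lam_in[OF a j lam_in[OF b a z]] lam_in[OF b j z]
          lam_comp[OF b a j eqI_sym[OF a b ab] z]] .
    also have "\<dots> = phi j b g z" using phi_eq[OF j b g z] by simp
    finally show "phi j b g z = phi a b (phi j a g) z" by simp
  qed
qed

lemma hatH_fun:
  assumes P: "\<Phi> \<in> prod_F I eqI lam0 F phi"
  shows "hatH \<Phi> \<in> fun_space (Sigma I lam0) (sig_eq eqI eq lam)"
  unfolding fun_space_def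
proof (intro CollectI ballI impI)
  fix p q assume p: "p \<in> Sigma I lam0" and q: "q \<in> Sigma I lam0" and pq: "sig_eq eqI eq lam p q"
  obtain a u where pa: "p = (a,u)" and a: "a \<in> I" and u: "u \<in> lam0 a" using p by auto
  obtain b v where qb: "q = (b,v)" and b: "b \<in> I" and v: "v \<in> lam0 b" using q by auto
  have ab: "eqI a b" and e: "eq b (lam a b u) v" using pq pa qb by (auto simp: sig_eq_def)
  have Fa: "\<Phi> a \<in> F a" and Fb: "\<Phi> b \<in> F b" using P a b prod_F_D1 by auto
  have "\<Phi> b v = \<Phi> b (lam a b u)"
    using F_resp[OF b Fb lam_in[OF a b u] v e] by simp
  also have "\<dots> = phi a b (\<Phi> a) (lam a b u)" using prod_F_D2[OF P a b ab lam_in[OF a b u]] .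
  also have "\<dots> = \<Phi> a (lam b a (lam a b u))" using phi_eq[OF a b Fa lam_in[OF a b u]] .
  also have "\<dots> = \<Phi> a u"
  proof -
    have e1: "eq a (lam b a (lam a b u)) (lam a a u)" using lam_comp[OF a b a ab u] .
    have e2: "eq a (lam a a u) u" using lam_id[OF a u] .
    have "eq a (lam b a (lam a b u)) u"
      using eq_trans[OF a lam_in[OF b a lam_in[OF a b u]] lam_in[OF a a u] u e1 e2] .
    thus ?thesis using F_resp[OF a Fa lam_in[OF b a lam_in[OF a b u]] u] by simp
  qed
  finally show "hatH \<Phi> p = hatH \<Phi> q" using pa qb by (simp add: hatH_def)
qed

lemma hatH_KH: "\<Phi> \<in> prod_F I eqI lam0 F phi \<Longrightarrow> hatH \<Phi> \<in> KH_set I eqI K lam0 eq lam F phi"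
  unfolding KH_set_def using hatH_fun by (auto simp: feq_def)

lemma hatK_KH: assumes k: "k \<in> K" shows "hatK k \<in> KH_set I eqI K lam0 eq lam F phi"
proof -
  have "hatK k \<in> fun_space (Sigma I lam0) (sig_eq eqI eq lam)"
    unfolding fun_space_def using K_resp[OF k]
    by (auto simp: hatK_def sig_eq_def)
  thus ?thesis unfolding KH_set_def using k by (auto simp: feq_def)
qed

lemma hatPhi_vals:
  assumes j: "j \<in> I" and g: "g \<in> F j" and i: "i \<in> I" and x: "x \<in> lam0 i" and y: "y \<in> lam0 j"
  shows "hatH (\<lambda>k. phi j k g) (i,x) = g (lam i j x)" "hatH (\<lambda>k. phi j k g) (j,y) = g y"
proof -
  show "hatH (\<lambda>k. phi j k g) (i,x) = g (lam i j x)" using phi_eq[OF j i g x] by (simp add: hatH_def)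
  have "hatH (\<lambda>k. phi j k g) (j,y) = g (lam j j y)" using phi_eq[OF j j g y] by (simp add: hatH_def)
  also have "\<dots> = g y" using F_resp[OF j g lam_in[OF j j y] y lam_id[OF j y]] .
  finally show "hatH (\<lambda>k. phi j k g) (j,y) = g y" .
qed

lemma part1:
  assumes p: "p \<in> Sigma I lam0" and q: "q \<in> Sigma I lam0"
  shows "ind_neq (KH_set I eqI K lam0 eq lam F phi) p q \<longleftrightarrow> sig_neq K neq lam p q"
proof -
  obtain i x where pa: "p = (i,x)" and i: "i \<in> I" and x: "x \<in> lam0 i" using p by auto
  obtain j y where qb: "q = (j,y)" and j: "j \<in> I" and y: "y \<in> lam0 j" using q by auto
  show ?thesis
  proof
    assume "ind_neq (KH_set I eqI K lam0 eq lam F phi) p q"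
    then obtain f where f: "f \<in> KH_set I eqI K lam0 eq lam F phi" and fn: "f p \<noteq> f q"
      by (auto simp: ind_neq_def real_neq_iff)
    from f consider (k) k where "k \<in> K" "feq (Sigma I lam0) f (hatK k)"
      | (h) \<Phi> where "\<Phi> \<in> prod_F I eqI lam0 F phi" "feq (Sigma I lam0) f (hatH \<Phi>)"
      unfolding KH_set_def by blast
    then show "sig_neq K neq lam p q"
    proof cases
      case k
      then have "k i \<noteq> k j" using fn p q pa qb by (auto simp: feq_def hatK_def)
      thus ?thesis using k pa qb by (auto simp: sig_neq_def ind_neq_def real_neq_iff)
    next
      case h
      note P = h(1)
      have ne: "\<Phi> i x \<noteq> \<Phi> j y" using fn h p q pa qb by (auto simp: feq_def hatH_def)
      show ?thesis
      proof (cases "ind_neq K i j")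
        case True thus ?thesis using pa qb by (simp add: sig_neq_def)
      next
        case False
        hence "ind_eq K i j" by (auto simp: ind_neq_def ind_eq_def real_neq_iff)
        hence ij: "eqI i j" using K_sep i j by blast
        have Fi: "\<Phi> i \<in> F i" and Fj: "\<Phi> j \<in> F j" using P i j prod_F_D1 by auto
        have "\<Phi> j (lam i j x) = phi i j (\<Phi> i) (lam i j x)" using prod_F_D2[OF P i j ij lam_in[OF i j x]] .
        also have "\<dots> = \<Phi> i (lam j i (lam i j x))" using phi_eq[OF i j Fi lam_in[OF i j x]] .
        also have "\<dots> = \<Phi> i x"
        proof -
          have "eq i (lam j i (lam i j x)) x"
            using eq_trans[OF i lam_in[OF j i lam_in[OF i j x]] lam_in[OF i i x] x
                lam_comp[OF i j i ij x] lam_id[OF i x]] .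
          thus ?thesis using F_resp[OF i Fi lam_in[OF j i lam_in[OF i j x]] x] by simp
        qed
        finally have "\<Phi> j (lam i j x) \<noteq> \<Phi> j y" using ne by simp
        hence "ind_neq (F j) (lam i j x) y" using Fj by (auto simp: ind_neq_def real_neq_iff)
        hence "neq j (lam i j x) y" using neq_iff[OF j lam_in[OF i j x] y] by simp
        thus ?thesis using pa qb by (simp add: sig_neq_def)
      qed
    qed
  next
    assume "sig_neq K neq lam p q"
    hence "ind_neq K i j \<or> neq j (lam i j x) y" using pa qb by (simp add: sig_neq_def)
    thus "ind_neq (KH_set I eqI K lam0 eq lam F phi) p q"
    proof
      assume "ind_neq K i j"
      then obtain k where k: "k \<in> K" "k i \<noteq> k j" by (auto simp: ind_neq_def real_neq_iff)
      thus ?thesis using hatK_KH[OF k(1)] pa qb unfolding ind_neq_def real_neq_iff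
        by (intro bexI[of _ "hatK k"]) (auto simp: hatK_def)
    next
      assume "neq j (lam i j x) y"
      hence "ind_neq (F j) (lam i j x) y" using neq_iff[OF j lam_in[OF i j x] y] by simp
      then obtain g where g: "g \<in> F j" "g (lam i j x) \<noteq> g y" by (auto simp: ind_neq_def real_neq_iff)
      have KH: "hatH (\<lambda>k. phi j k g) \<in> KH_set I eqI K lam0 eq lam F phi"
        using hatH_KH[OF Phi_construct[OF j g(1)]] .
      show ?thesis unfolding ind_neq_def real_neq_iff
        using KH hatPhi_vals[OF j g(1) i x y] g(2) pa qb by metis
    qed
  qed
qed

lemma sig_set: "set_with_ineq (Sigma I lam0) (sig_eq eqI eq lam) (sig_neq K neq lam)"
  unfolding set_with_ineq_def
proof (intro conjI ballI impI)
  fix p assume "p \<in> Sigma I lam0"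
  then obtain i x where "p = (i,x)" "i \<in> I" "x \<in> lam0 i" by auto
  thus "sig_eq eqI eq lam p p" using eqI_refl lam_id by (simp add: sig_eq_def)
next
  fix p q assume p: "p \<in> Sigma I lam0" and q: "q \<in> Sigma I lam0" and pq: "sig_eq eqI eq lam p q"
  obtain i x where pa: "p = (i,x)" and i: "i \<in> I" and x: "x \<in> lam0 i" using p by auto
  obtain j y where qb: "q = (j,y)" and j: "j \<in> I" and y: "y \<in> lam0 j" using q by auto
  have ij: "eqI i j" and e: "eq j (lam i j x) y" using pq pa qb by (auto simp: sig_eq_def)
  have e1: "eq i (lam j i y) (lam j i (lam i j x))"
    using lam_resp[OF j i y lam_in[OF i j x] eq_sym[OF j lam_in[OF i j x] y e]] .
  have e2: "eq i (lam j i (lam i j x)) x"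
    using eq_trans[OF i lam_in[OF j i lam_in[OF i j x]] lam_in[OF i i x] x
        lam_comp[OF i j i ij x] lam_id[OF i x]] .
  have "eq i (lam j i y) x"
    using eq_trans[OF i lam_in[OF j i y] lam_in[OF j i lam_in[OF i j x]] x e1 e2] .
  thus "sig_eq eqI eq lam q p" using pa qb eqI_sym[OF i j ij] by (simp add: sig_eq_def)
next
  fix p q r assume p: "p \<in> Sigma I lam0" and q: "q \<in> Sigma I lam0" and r: "r \<in> Sigma I lam0"
    and pqr: "sig_eq eqI eq lam p q \<and> sig_eq eqI eq lam q r"
  obtain i x where pa: "p = (i,x)" and i: "i \<in> I" and x: "x \<in> lam0 i" using p by auto
  obtain j y where qb: "q = (j,y)" and j: "j \<in> I" and y: "y \<in> lam0 j" using q by auto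
  obtain k z where rc: "r = (k,z)" and k: "k \<in> I" and z: "z \<in> lam0 k" using r by auto
  have ij: "eqI i j" and e: "eq j (lam i j x) y" and jk: "eqI j k" and e': "eq k (lam j k y) z"
    using pqr pa qb rc by (auto simp: sig_eq_def)
  have e1: "eq k (lam i k x) (lam j k (lam i j x))"
    using eq_sym[OF k lam_in[OF j k lam_in[OF i j x]] lam_in[OF i k x] lam_comp[OF i j k ij x]] .
  have e2: "eq k (lam j k (lam i j x)) (lam j k y)"
    using lam_resp[OF j k lam_in[OF i j x] y e] .
  have "eq k (lam i k x) z"
    using eq_trans[OF k lam_in[OF i k x] lam_in[OF j k y] z
        eq_trans[OF k lam_in[OF i k x] lam_in[OF j k lam_in[OF i j x]] lam_in[OF j k y] e1 e2] e'] .
  thus "sig_eq eqI eq lam p r" using pa rc eqI_trans[OF i j k ij jk] by (simp add: sig_eq_def)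
next
  fix p q assume p: "p \<in> Sigma I lam0" and q: "q \<in> Sigma I lam0"
    and pq: "sig_eq eqI eq lam p q \<and> sig_neq K neq lam p q"
  obtain i x where pa: "p = (i,x)" and i: "i \<in> I" and x: "x \<in> lam0 i" using p by auto
  obtain j y where qb: "q = (j,y)" and j: "j \<in> I" and y: "y \<in> lam0 j" using q by auto
  have ij: "eqI i j" and e: "eq j (lam i j x) y" using pq pa qb by (auto simp: sig_eq_def)
  have "ind_neq K i j \<or> neq j (lam i j x) y" using pq pa qb by (simp add: sig_neq_def)
  thus False
  proof
    assume "ind_neq K i j" thus False using neqI_iff[OF i j] eqI_neqI[OF i j ij] by blast
  next
    assume "neq j (lam i j x) y" thus False using eq_neq[OF j lam_in[OF i j x] y e] by blast
  qed
qed

lemma sig_ext: "extensional_subset (Sigma I lam0) (sig_eq eqI eq lam) (KH_set I eqI K lam0 eq lam F phi)"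
  unfolding extensional_subset_def
proof (intro conjI ballI impI)
  show "KH_set I eqI K lam0 eq lam F phi \<subseteq> fun_space (Sigma I lam0) (sig_eq eqI eq lam)"
    unfolding KH_set_def by blast
next
  fix f g assume f: "f \<in> KH_set I eqI K lam0 eq lam F phi"
    and g: "g \<in> fun_space (Sigma I lam0) (sig_eq eqI eq lam)" and fg: "feq (Sigma I lam0) f g"
  have "\<And>h. feq (Sigma I lam0) f h \<Longrightarrow> feq (Sigma I lam0) g h" using fg by (simp add: feq_def)
  thus "g \<in> KH_set I eqI K lam0 eq lam F phi" using f g unfolding KH_set_def by blast
qed

lemma sig_sep:
  assumes p: "p \<in> Sigma I lam0" and q: "q \<in> Sigma I lam0"
    and h: "ind_eq (KH_set I eqI K lam0 eq lam F phi) p q"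
  shows "sig_eq eqI eq lam p q"
proof -
  obtain i x where pa: "p = (i,x)" and i: "i \<in> I" and x: "x \<in> lam0 i" using p by auto
  obtain j y where qb: "q = (j,y)" and j: "j \<in> I" and y: "y \<in> lam0 j" using q by auto
  have "ind_eq K i j"
    unfolding ind_eq_def
  proof
    fix k assume k: "k \<in> K"
    have "hatK k p = hatK k q" using h hatK_KH[OF k] by (auto simp: ind_eq_def)
    thus "k i = k j" using pa qb by (simp add: hatK_def)
  qed
  hence ij: "eqI i j" using K_sep i j by blast
  have "ind_eq (F j) (lam i j x) y"
    unfolding ind_eq_def
  proof
    fix g assume g: "g \<in> F j"
    have "hatH (\<lambda>k. phi j k g) p = hatH (\<lambda>k. phi j k g) q"
      using h hatH_KH[OF Phi_construct[OF j g]] by (auto simp: ind_eq_def)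
    thus "g (lam i j x) = g y" using hatPhi_vals[OF j g i x y] pa qb by simp
  qed
  hence "eq j (lam i j x) y" using F_sep[OF j lam_in[OF i j x] y] by simp
  thus ?thesis using ij pa qb by (simp add: sig_eq_def)
qed

lemma main:
  "(\<forall>p\<in>Sigma I lam0. \<forall>q\<in>Sigma I lam0.
            ind_neq (KH_set I eqI K lam0 eq lam F phi) p q \<longleftrightarrow> sig_neq K neq lam p q)
         \<and> completely_separated (Sigma I lam0) (sig_eq eqI eq lam) (sig_neq K neq lam)
             (KH_set I eqI K lam0 eq lam F phi)"
  unfolding completely_separated_def using part1 sig_set sig_ext sig_sep by simp

end

theorem theorem4p8:
  fixes I :: "'i set" and eqI neqI :: "'i \<Rightarrow> 'i \<Rightarrow> bool" and K :: "('i \<Rightarrow> real) set"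
    and lam0 :: "'i \<Rightarrow> 'x set" and eq neq :: "'i \<Rightarrow> 'x \<Rightarrow> 'x \<Rightarrow> bool"
    and lam :: "'i \<Rightarrow> 'i \<Rightarrow> 'x \<Rightarrow> 'x"
    and F :: "'i \<Rightarrow> ('x \<Rightarrow> real) set" and phi :: "'i \<Rightarrow> 'i \<Rightarrow> ('x \<Rightarrow> real) \<Rightarrow> ('x \<Rightarrow> real)"
  assumes "completely_separated I eqI neqI K"
    and "global_family_cs I eqI lam0 eq neq lam F phi"
  shows "(\<forall>p\<in>Sigma I lam0. \<forall>q\<in>Sigma I lam0.
            ind_neq (KH_set I eqI K lam0 eq lam F phi) p q \<longleftrightarrow> sig_neq K neq lam p q)
         \<and> completely_separated (Sigma I lam0) (sig_eq eqI eq lam) (sig_neq K neq lam)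
             (KH_set I eqI K lam0 eq lam F phi)"
proof -
  interpret thm48 I eqI neqI K lam0 eq neq lam F phi using assms by unfold_locales
  show ?thesis by (rule main)
qed

end
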